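(* Let $f(z)=z+\sum_{n=2}^{\infty}a_nz^n\in\mathcal{S}^{*}_{\rho}$. Then $$|H_{2,3}(f)|=|a_3a_5-a_4^2|\le 0.146048 .$$
   Context: Let $\mathbb{D}=\{z\in\mathbb{C}:|z|<1\}$. For analytic $g_1,g_2$ on $\mathbb{D}$, $g_1\prec g_2$ means there is an analytic $w:\mathbb{D}\to\mathbb{D}$ with $w(0)=0$ such that $g_1=g_2\circ w$. Here $\sinh^{-1}$ denotes the principal branch of the inverse hyperbolic sine with $\sinh^{-1}(0)=0$, analytic on $\mathbb{D}$. The class $\mathcal{S}^{*}_{\rho}$ consists of all univalent analytic functions $f$ on $\mathbb{D}$ with $f(z)=z+\sum_{n\ge2}a_nz^n$ such that $\frac{zf'(z)}{f(z)}\prec 1+\sinh^{-1}(z)$. *)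

theory Defs
  imports "HOL-Complex_Analysis.Complex_Analysis"
begin

definition subordinate :: "(complex \<Rightarrow> complex) \<Rightarrow> (complex \<Rightarrow> complex) \<Rightarrow> bool" where
  "subordinate g1 g2 \<longleftrightarrow>
     (\<exists>w. w holomorphic_on ball 0 1 \<and> w ` ball 0 1 \<subseteq> ball 0 1 \<and> w 0 = 0 \<and>
          (\<forall>z\<in>ball 0 1. g1 z = g2 (w z)))"

definition taylor_coeff :: "(complex \<Rightarrow> complex) \<Rightarrow> nat \<Rightarrow> complex" where
  "taylor_coeff f n = (deriv ^^ n) f 0 / fact n"

text \<open>The class S*_rho: normalized univalent analytic f on D with z f'/f \<prec> 1 + arsinh z.
  The value of z f'(z)/f(z) at z = 0 is taken as its limit 1 (removable singularity).\<close>
definition S_rho :: "(complex \<Rightarrow> complex) set" where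
  "S_rho = {f. f holomorphic_on ball 0 1 \<and> inj_on f (ball 0 1) \<and> f 0 = 0 \<and> deriv f 0 = 1 \<and>
              subordinate (\<lambda>z. if z = 0 then 1 else z * deriv f z / f z) (\<lambda>z. 1 + arsinh z)}"

end

theory Submission
  imports Defs
begin

abbreviation "B \<equiv> ball (0::complex) 1"

lemma tc_cong:
  assumes "\<And>z. z \<in> B \<Longrightarrow> f z = g z"
  shows "taylor_coeff f n = taylor_coeff g n"
proof -
  have "eventually (\<lambda>z. f z = g z) (nhds 0)"
    using eventually_nhds_in_open[of B 0] assms by (auto elim!: eventually_mono)
  then show ?thesis unfolding taylor_coeff_def using higher_deriv_cong_ev by metis
qed

lemma tc_0: "taylor_coeff f 0 = f 0" by (simp add: taylor_coeff_def)

lemma tc_mult: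
  assumes "f holomorphic_on B" "g holomorphic_on B"
  shows "taylor_coeff (\<lambda>z. f z * g z) n = (\<Sum>i=0..n. taylor_coeff f i * taylor_coeff g (n-i))"
proof -
  have "taylor_coeff (\<lambda>z. f z * g z) n =
     (\<Sum>i = 0..n. of_nat (n choose i) * (deriv ^^ i) f 0 * (deriv ^^ (n-i)) g 0) / fact n"
    unfolding taylor_coeff_def using higher_deriv_mult[OF assms, of 0 n] by simp
  also have "\<dots> = (\<Sum>i=0..n. taylor_coeff f i * taylor_coeff g (n-i))"
    unfolding sum_divide_distrib taylor_coeff_def
  proof (rule sum.cong[OF refl])
    fix i assume "i \<in> {0..n}"
    then have i: "i \<le> n" by simp
    have "of_nat (n choose i) = (fact n / (fact i * fact (n-i)) :: complex)"
      using binomial_fact[OF i] by simp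
    then show "of_nat (n choose i) * (deriv ^^ i) f 0 * (deriv ^^ (n - i)) g 0 / fact n =
         (deriv ^^ i) f 0 / fact i * ((deriv ^^ (n - i)) g 0 / fact (n - i))"
      by (simp add: field_simps)
  qed
  finally show ?thesis .
qed

lemma tc_add:
  assumes "f holomorphic_on B" "g holomorphic_on B"
  shows "taylor_coeff (\<lambda>z. f z + g z) n = taylor_coeff f n + taylor_coeff g n"
  unfolding taylor_coeff_def using higher_deriv_add[OF assms, of 0 n] by (simp add: add_divide_distrib)

lemma tc_diff:
  assumes "f holomorphic_on B" "g holomorphic_on B"
  shows "taylor_coeff (\<lambda>z. f z - g z) n = taylor_coeff f n - taylor_coeff g n"
  unfolding taylor_coeff_def using higher_deriv_diff[OF assms, of 0 n] by (simp add: diff_divide_distrib)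

lemma tc_cmult:
  assumes "f holomorphic_on B"
  shows "taylor_coeff (\<lambda>z. c * f z) n = c * taylor_coeff f n"
  unfolding taylor_coeff_def using higher_deriv_cmult[OF assms, of 0 n c] by simp

lemma tc_const: "taylor_coeff (\<lambda>z. c) n = (if n = 0 then c else 0)"
  by (simp add: taylor_coeff_def)

lemma tc_id: "taylor_coeff (\<lambda>z. z) n = (if n = 1 then 1 else 0)"
  by (simp add: taylor_coeff_def)

lemma tc_deriv:
  assumes "f holomorphic_on B"
  shows "taylor_coeff (deriv f) n = of_nat (Suc n) * taylor_coeff f (Suc n)"
proof -
  have "(deriv ^^ n) (deriv f) = (deriv ^^ Suc n) f" by (simp add: funpow_Suc_right del: funpow.simps)
  moreover have "(fact (Suc n) :: complex) = of_nat (Suc n) * fact n" by (simp add: fact_Suc)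
  moreover have "(fact n :: complex) \<noteq> 0" by simp
  ultimately show ?thesis unfolding taylor_coeff_def
    by (simp del: funpow.simps of_nat_Suc fact_Suc)
qed

lemma tc_zmult:
  assumes "g holomorphic_on B"
  shows "taylor_coeff (\<lambda>z. z * g z) (Suc k) = taylor_coeff g k"
proof -
  have "taylor_coeff (\<lambda>z. z * g z) (Suc k) = (\<Sum>i=0..Suc k. taylor_coeff (\<lambda>z. z) i * taylor_coeff g (Suc k-i))"
    by (rule tc_mult) (auto intro: assms holomorphic_intros)
  also have "\<dots> = (\<Sum>i\<in>{0..Suc k}. if i = 1 then taylor_coeff g k else 0)"
    by (rule sum.cong) (auto simp: tc_id)
  also have "\<dots> = taylor_coeff g k" by (subst sum.delta) auto
  finally show ?thesis .
qed

lemma schwarz_le: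
  assumes hol: "m holomorphic_on B" and m0: "m 0 = 0" and bd: "\<And>z. z \<in> B \<Longrightarrow> cmod (m z) \<le> 1"
  shows "\<And>z. z \<in> B \<Longrightarrow> cmod (m z) \<le> cmod z" and "cmod (deriv m 0) \<le> 1"
proof -
  have S: "cmod (of_real r * m z) \<le> cmod z \<and> cmod (deriv (\<lambda>z. of_real r * m z) 0) \<le> 1"
    if r: "0 < r" "r < 1" and z: "z \<in> B" for r z
  proof -
    have h: "(\<lambda>z. of_real r * m z) holomorphic_on B" by (intro holomorphic_intros hol)
    have n: "cmod (of_real r * m w) < 1" if "cmod w < 1" for w
    proof -
      have "cmod (m w) \<le> 1" using bd that by simp
      then have "r * cmod (m w) \<le> r * 1" using r by (intro mult_left_mono) auto
      then have "r * cmod (m w) < 1" using r by linarith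
      then show ?thesis using r by (simp add: norm_mult)
    qed
    from Schwarz_Lemma(1,2)[OF h _ n, of z] z m0 show ?thesis by auto
  qed
  have dm: "deriv (\<lambda>z. of_real r * m z) 0 = of_real r * deriv m 0" for r
    by (rule deriv_cmult) (use hol in \<open>auto intro: holomorphic_on_imp_differentiable_at\<close>)
  show "cmod (m z) \<le> cmod z" if z: "z \<in> B" for z
  proof (rule field_le_mult_one_interval)
    fix r :: real assume "0 < r" "r < 1"
    with S[OF this z] show "r * cmod (m z) \<le> cmod z" by (simp add: norm_mult)
  qed
  show "cmod (deriv m 0) \<le> 1"
  proof (rule field_le_mult_one_interval)
    fix r :: real assume r: "0 < r" "r < 1"
    with S[OF this, of 0] dm[of r] show "r * cmod (deriv m 0) \<le> 1" by (simp add: norm_mult)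
  qed
qed

lemma divz:
  assumes hol: "m holomorphic_on B" and m0: "m 0 = 0" and bd: "\<And>z. z \<in> B \<Longrightarrow> cmod (m z) \<le> 1"
  obtains n where "n holomorphic_on B" "\<And>z. z \<in> B \<Longrightarrow> cmod (n z) \<le> 1"
    "\<And>k. taylor_coeff n k = taylor_coeff m (Suc k)" "\<And>z. z \<in> B \<Longrightarrow> m z = z * n z"
proof -
  define n where "n = (\<lambda>z. if z = 0 then deriv m 0 else (m z - m 0) / (z - 0))"
  have hn: "n holomorphic_on B" unfolding n_def by (rule pole_lemma_open[OF hol]) auto
  have bn: "cmod (n z) \<le> 1" if "z \<in> B" for z
  proof (cases "z = 0")
    case True then show ?thesis using schwarz_le(2)[OF hol m0 bd] by (simp add: n_def)
  next
    case False
    have "cmod (m z) \<le> cmod z" using schwarz_le(1)[OF hol m0 bd that] .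
    then show ?thesis using False by (simp add: n_def m0 norm_divide divide_le_eq)
  qed
  have eq: "m z = z * n z" if "z \<in> B" for z
    by (cases "z = 0") (auto simp: n_def m0)
  have "taylor_coeff n k = taylor_coeff m (Suc k)" for k
  proof -
    have "taylor_coeff m (Suc k) = taylor_coeff (\<lambda>z. z * n z) (Suc k)" by (rule tc_cong) (simp add: eq)
    also have "\<dots> = taylor_coeff n k" by (rule tc_zmult[OF hn])
    finally show ?thesis by simp
  qed
  with that hn bn eq show ?thesis by blast
qed

lemma mobius_ineq:
  fixes u a :: complex
  assumes "cmod u \<le> 1" "cmod a < 1"
  shows "cmod (u - a) \<le> cmod (1 - cnj a * u)"
proof -
  have id: "(cmod (1 - cnj a * u))^2 - (cmod (u - a))^2 = (1 - (cmod a)^2) * (1 - (cmod u)^2)"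
    unfolding cmod_power2 by (simp add: power2_eq_square algebra_simps)
  have "0 \<le> (1 - (cmod a)^2) * (1 - (cmod u)^2)"
    using assms by (intro mult_nonneg_nonneg) (auto simp: abs_square_le_1)
  then have "(cmod (u - a))^2 \<le> (cmod (1 - cnj a * u))^2" using id by linarith
  then show ?thesis by (rule power2_le_imp_le) simp
qed

lemma mobius_den:
  fixes u a :: complex
  assumes "cmod u \<le> 1" "cmod a < 1"
  shows "1 - cnj a * u \<noteq> 0"
proof
  assume "1 - cnj a * u = 0"
  then have "cnj a * u = 1" by simp
  then have "cmod a * cmod u = 1" by (metis complex_mod_cnj norm_mult norm_one)
  moreover have "cmod a * cmod u \<le> cmod a * 1"
    using assms by (intro mult_left_mono) auto
  ultimately show False using assms by simp
qed

lemma mobius: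
  assumes hol: "h holomorphic_on B" and bd: "\<And>z. z \<in> B \<Longrightarrow> cmod (h z) \<le> 1" and a: "cmod a < 1"
  shows "(\<lambda>z. (h z - a) / (1 - cnj a * h z)) holomorphic_on B"
    and "\<And>z. z \<in> B \<Longrightarrow> cmod ((h z - a) / (1 - cnj a * h z)) \<le> 1"
    and "\<And>z. z \<in> B \<Longrightarrow> (h z - a) / (1 - cnj a * h z) * (1 - cnj a * h z) = h z - a"
proof -
  show "(\<lambda>z. (h z - a) / (1 - cnj a * h z)) holomorphic_on B"
    using mobius_den[OF bd a] by (intro holomorphic_intros hol) auto
  show "cmod ((h z - a) / (1 - cnj a * h z)) \<le> 1" if "z \<in> B" for z
    using mobius_ineq[OF bd[OF that] a] mobius_den[OF bd[OF that] a]
    by (simp add: norm_divide divide_le_eq)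
  show "(h z - a) / (1 - cnj a * h z) * (1 - cnj a * h z) = h z - a" if "z \<in> B" for z
    using mobius_den[OF bd[OF that] a] by simp
qed

lemma tc_one_minus:
  assumes "h holomorphic_on B"
  shows "taylor_coeff (\<lambda>z. 1 - c * h z) n = (if n = 0 then 1 else 0) - c * taylor_coeff h n"
  using tc_diff[of "\<lambda>z. 1" "\<lambda>z. c * h z" n] tc_cmult[OF assms, of c n] assms
  by (simp add: tc_const holomorphic_intros)

lemma tc_minus_const:
  assumes "h holomorphic_on B"
  shows "taylor_coeff (\<lambda>z. h z - a) n = taylor_coeff h n - (if n = 0 then a else 0)"
  using tc_diff[of h "\<lambda>z. a" n] assms by (simp add: tc_const)

lemma mobius_coeffs:
  assumes hol: "h holomorphic_on B" and bd: "\<And>z. z \<in> B \<Longrightarrow> cmod (h z) \<le> 1" and a: "cmod a < 1"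
  defines "m \<equiv> (\<lambda>z. (h z - a) / (1 - cnj a * h z))"
  shows "(\<Sum>i=0..n. taylor_coeff m i * ((if n - i = 0 then 1 else 0) - cnj a * taylor_coeff h (n - i)))
         = taylor_coeff h n - (if n = 0 then a else 0)"
proof -
  have hm: "m holomorphic_on B" unfolding m_def by (rule mobius(1)[OF hol bd a])
  have "taylor_coeff (\<lambda>z. m z * (1 - cnj a * h z)) n = taylor_coeff (\<lambda>z. h z - a) n"
    by (rule tc_cong) (use mobius_den[OF bd a] in \<open>auto simp: m_def\<close>)
  also have "\<dots> = taylor_coeff h n - (if n = 0 then a else 0)" by (rule tc_minus_const[OF hol])
  also have "taylor_coeff (\<lambda>z. m z * (1 - cnj a * h z)) n =
      (\<Sum>i=0..n. taylor_coeff m i * taylor_coeff (\<lambda>z. 1 - cnj a * h z) (n - i))"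
    by (rule tc_mult[OF hm]) (intro holomorphic_intros hol)
  finally show ?thesis by (simp add: tc_one_minus[OF hol])
qed


definition Hc :: "complex \<Rightarrow> complex \<Rightarrow> complex \<Rightarrow> complex \<Rightarrow> complex" where
  "Hc c1 c2 c3 c4 = (c2 + c1^2) / 2 * (c4 / 4 + c1 * c3 / 3 + c2^2 / 8 + c1^2 * c2 / 8 - c1^4 / 72)
     - (c3 / 3 + c1 * c2 / 2 + c1^3 / 9)^2"

lemma ident:
  fixes c1 ab d0 d1 d2 X :: complex
  assumes X: "c1 * ab = X"
  defines "Sx \<equiv> 1 - X"
  defines "c2 \<equiv> Sx * d0"
  defines "c3 \<equiv> Sx * d1 - ab * Sx * d0^2"
  defines "c4 \<equiv> Sx * d2 - ab * (d0 * c3 + d1 * c2)"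
  shows "Hc c1 c2 c3 c4 =
      (0 - Sx^2/9) * (c1^0 * ab^0 * d0^0 * d1^2 * d2^0)
    + (Sx^2/8) * (c1^0 * ab^0 * d0^1 * d1^0 * d2^1)
    + (X*Sx^2/6 + Sx^3/16 + X^2*Sx/8) * (c1^0 * ab^0 * d0^3 * d1^0 * d2^0)
    + (0 - Sx^2/36) * (c1^0 * ab^1 * d0^2 * d1^1 * d2^0)
    + (Sx^2/72) * (c1^0 * ab^2 * d0^4 * d1^0 * d2^0)
    + (0 - (Sx^2/6 + X*Sx/4)) * (c1^1 * ab^0 * d0^1 * d1^1 * d2^0)
    + (Sx/8) * (c1^2 * ab^0 * d0^0 * d1^0 * d2^1)
    + (0 - (Sx^2/8 + 5*X*Sx/54)) * (c1^2 * ab^0 * d0^2 * d1^0 * d2^0)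
    + (5*Sx/54) * (c1^3 * ab^0 * d0^0 * d1^1 * d2^0)
    + (0 - Sx/18) * (c1^4 * ab^0 * d0^1 * d1^0 * d2^0)
    + (0 - 25/1296) * (c1^6 * ab^0 * d0^0 * d1^0 * d2^0)"
  unfolding Hc_def c2_def c3_def c4_def Sx_def X[symmetric] by (simp add: field_simps eval_nat_numeral)

definition Tf :: "real \<Rightarrow> real \<Rightarrow> real \<Rightarrow> real \<Rightarrow> real" where
  "Tf x s y t =
      (s^2/9) * (x^0 * y^0 * t^2)
    + (s^2/8) * (x^0 * y^1 * t^1)
    + (x^2* s^2/6 + s^3/16 + (x^2)^2* s/8) * (x^0 * y^3 * t^0)
    + (s^2/36) * (x^1 * y^2 * t^1)
    + (s^2/72) * (x^2 * y^4 * t^0)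
    + (s^2/6 + x^2* s/4) * (x^1 * y^1 * t^1)
    + (s/8) * (x^2 * y^0 * t^1)
    + (s^2/8 + 5*x^2* s/54) * (x^2 * y^2 * t^0)
    + (5* s/54) * (x^3 * y^0 * t^1)
    + (s/18) * (x^4 * y^1 * t^0)
    + (25/1296) * (x^6 * y^0 * t^0)"

lemma normadd: "cmod a \<le> P1 \<Longrightarrow> cmod b \<le> P2 \<Longrightarrow> cmod (a + b) \<le> P1 + P2"
  by (rule order_trans[OF norm_triangle_ineq]) (rule add_mono)

lemma leafb:
  assumes "cmod c = Q" "cmod M \<le> m" shows "cmod (c * M) \<le> Q * m"
proof -
  have q: "0 \<le> Q" using assms(1) norm_ge_zero by metis
  have "cmod (c * M) = Q * cmod M" using assms(1) by (simp add: norm_mult)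
  also have "\<dots> \<le> Q * m" using assms(2) q by (rule mult_left_mono)
  finally show ?thesis .
qed

lemma cof: "c = of_real r \<Longrightarrow> 0 \<le> r \<Longrightarrow> cmod c = r" by simp
lemma cofn: "c = of_real (- r) \<Longrightarrow> 0 \<le> r \<Longrightarrow> cmod c = r" by simp

lemma mono_bd:
  fixes c1 ab d0 d1 d2 :: complex
  assumes "cmod c1 = x" "cmod ab = x" "cmod d0 = y" "cmod d1 \<le> t" "cmod d2 \<le> t"
  shows "cmod (c1^a * ab^b * d0^e * d1^f * d2^g) \<le> x^(a+b) * y^e * t^(f+g)"
proof -
  have t0: "0 \<le> t" using assms(4) norm_ge_zero[of d1] by linarith
  have "cmod (c1^a * ab^b * d0^e * d1^f * d2^g) = x^a * x^b * y^e * cmod d1 ^ f * cmod d2 ^ g"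
    using assms by (simp add: norm_mult norm_power)
  also have "\<dots> \<le> x^a * x^b * y^e * t ^ f * t ^ g"
    using assms t0 by (intro mult_mono power_mono mult_nonneg_nonneg zero_le_power) auto
  also have "\<dots> = x^(a+b) * y^e * t^(f+g)" by (simp add: power_add)
  finally show ?thesis .
qed

lemma Hbound:
  fixes c1 d0 d1 d2 :: complex
  assumes x1: "cmod c1 \<le> 1" and b1: "cmod d1 \<le> 1 - (cmod d0)^2" and b2: "cmod d2 \<le> 1 - (cmod d0)^2"
  defines "s \<equiv> 1 - (cmod c1)^2"
  defines "c2 \<equiv> of_real s * d0"
  defines "c3 \<equiv> of_real s * d1 - cnj c1 * of_real s * d0^2"
  defines "c4 \<equiv> of_real s * d2 - cnj c1 * (d0 * c3 + d1 * c2)"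
  shows "cmod (Hc c1 c2 c3 c4) \<le> Tf (cmod c1) s (cmod d0) (1 - (cmod d0)^2)"
proof -
  define x where "x = cmod c1"
  define y where "y = cmod d0"
  define t where "t = 1 - y^2"
  define X :: complex where "X = of_real (x^2)"
  have X: "c1 * cnj c1 = X" unfolding X_def x_def by (rule complex_norm_square[symmetric])
  have Sx: "1 - X = of_real s" by (simp add: X_def s_def x_def)
  have s0: "0 \<le> s" using x1 unfolding s_def by (simp add: abs_square_le_1)
  have x0: "0 \<le> x" by (simp add: x_def)
  note I = ident[OF X, of d0 d1 d2, unfolded Sx]
  have mb: "\<And>a b e f g. cmod (c1^a * cnj c1^b * d0^e * d1^f * d2^g) \<le> x^(a+b) * y^e * t^(f+g)"
    by (rule mono_bd) (use b1 b2 in \<open>auto simp: x_def y_def t_def\<close>)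
  show ?thesis
    unfolding c4_def c3_def c2_def I Tf_def x_def[symmetric] y_def[symmetric] t_def[symmetric]
    apply (intro normadd)
    apply (rule leafb,
       ((rule cof, simp add: X_def, intro add_nonneg_nonneg mult_nonneg_nonneg divide_nonneg_pos zero_le_power s0 x0 zero_le_numeral zero_less_numeral)
       | (rule cofn, simp add: X_def, intro add_nonneg_nonneg mult_nonneg_nonneg divide_nonneg_pos zero_le_power s0 x0 zero_le_numeral zero_less_numeral)),
       (rule order_trans[OF mb], simp add: eval_nat_numeral))+
    done
qed

lemma Tf_mono:
  assumes "0 \<le> x" "x \<le> X" "0 \<le> s" "s \<le> S" "0 \<le> y" "y \<le> Y" "0 \<le> t" "t \<le> T"
  shows "Tf x s y t \<le> Tf X S Y T"
proof -
  have X: "0 \<le> X" "0 \<le> S" "0 \<le> Y" "0 \<le> T" using assms by linarith+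
  show ?thesis unfolding Tf_def using assms X
    by (intro add_mono mult_mono power_mono divide_right_mono mult_nonneg_nonneg add_nonneg_nonneg
        divide_nonneg_pos zero_le_power order_refl; simp)
qed

definition good :: "real \<Rightarrow> real \<Rightarrow> real \<Rightarrow> real \<Rightarrow> bool" where
  "good x0 x1 y0 y1 \<longleftrightarrow> (\<forall>x y. x0 \<le> x \<and> x \<le> x1 \<and> y0 \<le> y \<and> y \<le> y1 \<longrightarrow>
      Tf x (1 - x^2) y (1 - y^2) \<le> 146048 / 1000000)"

lemma splitx: "good x0 m y0 y1 \<Longrightarrow> good m x1 y0 y1 \<Longrightarrow> good x0 x1 y0 y1"
  unfolding good_def by (meson linear)

lemma splity: "good x0 x1 y0 m \<Longrightarrow> good x0 x1 m y1 \<Longrightarrow> good x0 x1 y0 y1"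
  unfolding good_def by (meson linear)

lemma leaf:
  assumes "0 \<le> x0" "0 \<le> y0" "x1 \<le> 1" "y1 \<le> 1"
    and "Tf x1 (1 - x0^2) y1 (1 - y0^2) \<le> 146048 / 1000000"
  shows "good x0 x1 y0 y1"
  unfolding good_def
proof (intro allI impI)
  fix x y assume h: "x0 \<le> x \<and> x \<le> x1 \<and> y0 \<le> y \<and> y \<le> y1"
  have "Tf x (1 - x^2) y (1 - y^2) \<le> Tf x1 (1 - x0^2) y1 (1 - y0^2)"
  proof (rule Tf_mono)
    show "0 \<le> x" "x \<le> x1" "0 \<le> y" "y \<le> y1" using h assms by auto
    show "0 \<le> 1 - x^2" using h assms by (simp add: abs_square_le_1)
    show "0 \<le> 1 - y^2" using h assms by (simp add: abs_square_le_1)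
    show "1 - x^2 \<le> 1 - x0^2" using h assms by (simp add: power_mono)
    show "1 - y^2 \<le> 1 - y0^2" using h assms by (simp add: power_mono)
  qed
  with assms(5) show "Tf x (1 - x^2) y (1 - y^2) \<le> 146048 / 1000000" by linarith
qed

lemma good_all: "good 0 1 0 1"
    apply (rule splitx[where m="1/2"])
    apply (rule splitx[where m="1/4"])
    apply (rule splity[where m="1/2"])
    apply (rule splity[where m="1/4"])
    apply (rule splity[where m="1/8"])
    apply (rule leaf; simp add: Tf_def power_divide)
    apply (rule splitx[where m="1/8"])
    apply (rule splitx[where m="1/16"])
    apply (rule leaf; simp add: Tf_def power_divide)
    apply (rule leaf; simp add: Tf_def power_divide)
    apply (rule splity[where m="3/16"])
    apply (rule leaf; simp add: Tf_def power_divide)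
    apply (rule splitx[where m="3/16"])
    apply (rule leaf; simp add: Tf_def power_divide)
    apply (rule leaf; simp add: Tf_def power_divide)
    apply (rule splitx[where m="1/8"])
    apply (rule splity[where m="3/8"])
    apply (rule splity[where m="5/16"])
    apply (rule leaf; simp add: Tf_def power_divide)
    apply (rule splitx[where m="1/16"])
    apply (rule leaf; simp add: Tf_def power_divide)
    apply (rule leaf; simp add: Tf_def power_divide)
    apply (rule splity[where m="7/16"])
    apply (rule leaf; simp add: Tf_def power_divide)
    apply (rule leaf; simp add: Tf_def power_divide)
    apply (rule splitx[where m="3/16"])
    apply (rule splitx[where m="5/32"])
    apply (rule splity[where m="3/8"])
    apply (rule splity[where m="5/16"])
    apply (rule leaf; simp add: Tf_def power_divide)
    apply (rule leaf; simp add: Tf_def power_divide)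
    apply (rule splity[where m="7/16"])
    apply (rule leaf; simp add: Tf_def power_divide)
    apply (rule leaf; simp add: Tf_def power_divide)
    apply (rule splity[where m="3/8"])
    apply (rule splity[where m="5/16"])
    apply (rule leaf; simp add: Tf_def power_divide)
    apply (rule leaf; simp add: Tf_def power_divide)
    apply (rule splity[where m="7/16"])
    apply (rule leaf; simp add: Tf_def power_divide)
    apply (rule leaf; simp add: Tf_def power_divide)
    apply (rule splity[where m="3/8"])
    apply (rule splity[where m="5/16"])
    apply (rule splitx[where m="7/32"])
    apply (rule leaf; simp add: Tf_def power_divide)
    apply (rule leaf; simp add: Tf_def power_divide)
    apply (rule splity[where m="11/32"])
    apply (rule leaf; simp add: Tf_def power_divide)
    apply (rule splitx[where m="7/32"])
    apply (rule leaf; simp add: Tf_def power_divide)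
    apply (rule leaf; simp add: Tf_def power_divide)
    apply (rule splity[where m="7/16"])
    apply (rule splity[where m="13/32"])
    apply (rule splitx[where m="7/32"])
    apply (rule leaf; simp add: Tf_def power_divide)
    apply (rule leaf; simp add: Tf_def power_divide)
    apply (rule leaf; simp add: Tf_def power_divide)
    apply (rule splity[where m="15/32"])
    apply (rule leaf; simp add: Tf_def power_divide)
    apply (rule leaf; simp add: Tf_def power_divide)
    apply (rule splity[where m="3/4"])
    apply (rule splitx[where m="1/8"])
    apply (rule splity[where m="5/8"])
    apply (rule splity[where m="9/16"])
    apply (rule leaf; simp add: Tf_def power_divide)
    apply (rule leaf; simp add: Tf_def power_divide)
    apply (rule leaf; simp add: Tf_def power_divide)
    apply (rule splity[where m="5/8"])
    apply (rule splitx[where m="3/16"])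
    apply (rule splity[where m="9/16"])
    apply (rule leaf; simp add: Tf_def power_divide)
    apply (rule leaf; simp add: Tf_def power_divide)
    apply (rule splity[where m="9/16"])
    apply (rule splitx[where m="7/32"])
    apply (rule leaf; simp add: Tf_def power_divide)
    apply (rule leaf; simp add: Tf_def power_divide)
    apply (rule leaf; simp add: Tf_def power_divide)
    apply (rule splity[where m="11/16"])
    apply (rule leaf; simp add: Tf_def power_divide)
    apply (rule leaf; simp add: Tf_def power_divide)
    apply (rule splity[where m="7/8"])
    apply (rule splitx[where m="1/8"])
    apply (rule leaf; simp add: Tf_def power_divide)
    apply (rule leaf; simp add: Tf_def power_divide)
    apply (rule leaf; simp add: Tf_def power_divide)
    apply (rule splitx[where m="3/8"])
    apply (rule splity[where m="1/2"])
    apply (rule splity[where m="1/4"])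
    apply (rule splity[where m="1/8"])
    apply (rule leaf; simp add: Tf_def power_divide)
    apply (rule splitx[where m="5/16"])
    apply (rule splitx[where m="9/32"])
    apply (rule splitx[where m="17/64"])
    apply (rule leaf; simp add: Tf_def power_divide)
    apply (rule leaf; simp add: Tf_def power_divide)
    apply (rule leaf; simp add: Tf_def power_divide)
    apply (rule splitx[where m="11/32"])
    apply (rule leaf; simp add: Tf_def power_divide)
    apply (rule leaf; simp add: Tf_def power_divide)
    apply (rule splitx[where m="5/16"])
    apply (rule splitx[where m="9/32"])
    apply (rule splity[where m="3/8"])
    apply (rule splity[where m="5/16"])
    apply (rule leaf; simp add: Tf_def power_divide)
    apply (rule splitx[where m="17/64"])
    apply (rule leaf; simp add: Tf_def power_divide)
    apply (rule leaf; simp add: Tf_def power_divide)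
    apply (rule splity[where m="7/16"])
    apply (rule splity[where m="13/32"])
    apply (rule leaf; simp add: Tf_def power_divide)
    apply (rule leaf; simp add: Tf_def power_divide)
    apply (rule splitx[where m="17/64"])
    apply (rule leaf; simp add: Tf_def power_divide)
    apply (rule leaf; simp add: Tf_def power_divide)
    apply (rule splity[where m="3/8"])
    apply (rule splity[where m="5/16"])
    apply (rule leaf; simp add: Tf_def power_divide)
    apply (rule splitx[where m="19/64"])
    apply (rule leaf; simp add: Tf_def power_divide)
    apply (rule leaf; simp add: Tf_def power_divide)
    apply (rule splity[where m="7/16"])
    apply (rule splity[where m="13/32"])
    apply (rule leaf; simp add: Tf_def power_divide)
    apply (rule leaf; simp add: Tf_def power_divide)
    apply (rule splity[where m="15/32"])
    apply (rule leaf; simp add: Tf_def power_divide)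
    apply (rule leaf; simp add: Tf_def power_divide)
    apply (rule splitx[where m="11/32"])
    apply (rule splity[where m="3/8"])
    apply (rule splity[where m="5/16"])
    apply (rule leaf; simp add: Tf_def power_divide)
    apply (rule splitx[where m="21/64"])
    apply (rule leaf; simp add: Tf_def power_divide)
    apply (rule leaf; simp add: Tf_def power_divide)
    apply (rule splity[where m="7/16"])
    apply (rule splity[where m="13/32"])
    apply (rule leaf; simp add: Tf_def power_divide)
    apply (rule leaf; simp add: Tf_def power_divide)
    apply (rule splity[where m="15/32"])
    apply (rule leaf; simp add: Tf_def power_divide)
    apply (rule leaf; simp add: Tf_def power_divide)
    apply (rule splity[where m="3/8"])
    apply (rule splity[where m="5/16"])
    apply (rule leaf; simp add: Tf_def power_divide)
    apply (rule splitx[where m="23/64"])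
    apply (rule leaf; simp add: Tf_def power_divide)
    apply (rule leaf; simp add: Tf_def power_divide)
    apply (rule splity[where m="7/16"])
    apply (rule splity[where m="13/32"])
    apply (rule leaf; simp add: Tf_def power_divide)
    apply (rule leaf; simp add: Tf_def power_divide)
    apply (rule splity[where m="15/32"])
    apply (rule leaf; simp add: Tf_def power_divide)
    apply (rule leaf; simp add: Tf_def power_divide)
    apply (rule splitx[where m="5/16"])
    apply (rule splity[where m="3/4"])
    apply (rule splity[where m="5/8"])
    apply (rule splity[where m="9/16"])
    apply (rule splity[where m="17/32"])
    apply (rule leaf; simp add: Tf_def power_divide)
    apply (rule leaf; simp add: Tf_def power_divide)
    apply (rule splitx[where m="9/32"])
    apply (rule leaf; simp add: Tf_def power_divide)
    apply (rule leaf; simp add: Tf_def power_divide)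
    apply (rule splity[where m="11/16"])
    apply (rule leaf; simp add: Tf_def power_divide)
    apply (rule leaf; simp add: Tf_def power_divide)
    apply (rule splity[where m="7/8"])
    apply (rule leaf; simp add: Tf_def power_divide)
    apply (rule leaf; simp add: Tf_def power_divide)
    apply (rule splity[where m="3/4"])
    apply (rule splity[where m="5/8"])
    apply (rule splitx[where m="11/32"])
    apply (rule splity[where m="9/16"])
    apply (rule splitx[where m="21/64"])
    apply (rule leaf; simp add: Tf_def power_divide)
    apply (rule leaf; simp add: Tf_def power_divide)
    apply (rule leaf; simp add: Tf_def power_divide)
    apply (rule splity[where m="9/16"])
    apply (rule splitx[where m="23/64"])
    apply (rule leaf; simp add: Tf_def power_divide)
    apply (rule leaf; simp add: Tf_def power_divide)
    apply (rule leaf; simp add: Tf_def power_divide)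
    apply (rule splity[where m="11/16"])
    apply (rule splitx[where m="11/32"])
    apply (rule leaf; simp add: Tf_def power_divide)
    apply (rule leaf; simp add: Tf_def power_divide)
    apply (rule leaf; simp add: Tf_def power_divide)
    apply (rule splity[where m="7/8"])
    apply (rule splitx[where m="11/32"])
    apply (rule leaf; simp add: Tf_def power_divide)
    apply (rule leaf; simp add: Tf_def power_divide)
    apply (rule leaf; simp add: Tf_def power_divide)
    apply (rule splitx[where m="7/16"])
    apply (rule splity[where m="1/2"])
    apply (rule splity[where m="1/4"])
    apply (rule splity[where m="1/8"])
    apply (rule leaf; simp add: Tf_def power_divide)
    apply (rule splitx[where m="13/32"])
    apply (rule leaf; simp add: Tf_def power_divide)
    apply (rule leaf; simp add: Tf_def power_divide)
    apply (rule splitx[where m="13/32"])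
    apply (rule splity[where m="3/8"])
    apply (rule splity[where m="5/16"])
    apply (rule leaf; simp add: Tf_def power_divide)
    apply (rule splitx[where m="25/64"])
    apply (rule leaf; simp add: Tf_def power_divide)
    apply (rule leaf; simp add: Tf_def power_divide)
    apply (rule splity[where m="7/16"])
    apply (rule splity[where m="13/32"])
    apply (rule leaf; simp add: Tf_def power_divide)
    apply (rule leaf; simp add: Tf_def power_divide)
    apply (rule splity[where m="15/32"])
    apply (rule leaf; simp add: Tf_def power_divide)
    apply (rule leaf; simp add: Tf_def power_divide)
    apply (rule splity[where m="3/8"])
    apply (rule splity[where m="5/16"])
    apply (rule leaf; simp add: Tf_def power_divide)
    apply (rule splitx[where m="27/64"])
    apply (rule leaf; simp add: Tf_def power_divide)
    apply (rule leaf; simp add: Tf_def power_divide)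
    apply (rule splity[where m="7/16"])
    apply (rule splitx[where m="27/64"])
    apply (rule leaf; simp add: Tf_def power_divide)
    apply (rule leaf; simp add: Tf_def power_divide)
    apply (rule splity[where m="15/32"])
    apply (rule leaf; simp add: Tf_def power_divide)
    apply (rule leaf; simp add: Tf_def power_divide)
    apply (rule splity[where m="3/4"])
    apply (rule splitx[where m="13/32"])
    apply (rule splity[where m="5/8"])
    apply (rule splitx[where m="25/64"])
    apply (rule splity[where m="9/16"])
    apply (rule leaf; simp add: Tf_def power_divide)
    apply (rule leaf; simp add: Tf_def power_divide)
    apply (rule splity[where m="9/16"])
    apply (rule leaf; simp add: Tf_def power_divide)
    apply (rule leaf; simp add: Tf_def power_divide)
    apply (rule splity[where m="11/16"])
    apply (rule leaf; simp add: Tf_def power_divide)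
    apply (rule leaf; simp add: Tf_def power_divide)
    apply (rule splity[where m="5/8"])
    apply (rule splitx[where m="27/64"])
    apply (rule splity[where m="9/16"])
    apply (rule leaf; simp add: Tf_def power_divide)
    apply (rule leaf; simp add: Tf_def power_divide)
    apply (rule splity[where m="9/16"])
    apply (rule leaf; simp add: Tf_def power_divide)
    apply (rule leaf; simp add: Tf_def power_divide)
    apply (rule splity[where m="11/16"])
    apply (rule leaf; simp add: Tf_def power_divide)
    apply (rule leaf; simp add: Tf_def power_divide)
    apply (rule splity[where m="7/8"])
    apply (rule splity[where m="13/16"])
    apply (rule leaf; simp add: Tf_def power_divide)
    apply (rule leaf; simp add: Tf_def power_divide)
    apply (rule leaf; simp add: Tf_def power_divide)
    apply (rule splity[where m="1/2"])
    apply (rule splitx[where m="15/32"])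
    apply (rule splity[where m="1/4"])
    apply (rule leaf; simp add: Tf_def power_divide)
    apply (rule splity[where m="3/8"])
    apply (rule splity[where m="5/16"])
    apply (rule leaf; simp add: Tf_def power_divide)
    apply (rule splitx[where m="29/64"])
    apply (rule leaf; simp add: Tf_def power_divide)
    apply (rule leaf; simp add: Tf_def power_divide)
    apply (rule splitx[where m="29/64"])
    apply (rule splity[where m="7/16"])
    apply (rule leaf; simp add: Tf_def power_divide)
    apply (rule leaf; simp add: Tf_def power_divide)
    apply (rule splity[where m="7/16"])
    apply (rule leaf; simp add: Tf_def power_divide)
    apply (rule leaf; simp add: Tf_def power_divide)
    apply (rule splity[where m="1/4"])
    apply (rule leaf; simp add: Tf_def power_divide)
    apply (rule splity[where m="3/8"])
    apply (rule splity[where m="5/16"])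
    apply (rule leaf; simp add: Tf_def power_divide)
    apply (rule leaf; simp add: Tf_def power_divide)
    apply (rule splitx[where m="31/64"])
    apply (rule splity[where m="7/16"])
    apply (rule leaf; simp add: Tf_def power_divide)
    apply (rule leaf; simp add: Tf_def power_divide)
    apply (rule splity[where m="7/16"])
    apply (rule leaf; simp add: Tf_def power_divide)
    apply (rule leaf; simp add: Tf_def power_divide)
    apply (rule splity[where m="3/4"])
    apply (rule splitx[where m="15/32"])
    apply (rule splity[where m="5/8"])
    apply (rule splitx[where m="29/64"])
    apply (rule splity[where m="9/16"])
    apply (rule leaf; simp add: Tf_def power_divide)
    apply (rule leaf; simp add: Tf_def power_divide)
    apply (rule splity[where m="9/16"])
    apply (rule leaf; simp add: Tf_def power_divide)
    apply (rule leaf; simp add: Tf_def power_divide)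
    apply (rule splity[where m="11/16"])
    apply (rule leaf; simp add: Tf_def power_divide)
    apply (rule leaf; simp add: Tf_def power_divide)
    apply (rule splity[where m="5/8"])
    apply (rule splitx[where m="31/64"])
    apply (rule splity[where m="9/16"])
    apply (rule leaf; simp add: Tf_def power_divide)
    apply (rule leaf; simp add: Tf_def power_divide)
    apply (rule splity[where m="9/16"])
    apply (rule leaf; simp add: Tf_def power_divide)
    apply (rule leaf; simp add: Tf_def power_divide)
    apply (rule splity[where m="11/16"])
    apply (rule leaf; simp add: Tf_def power_divide)
    apply (rule leaf; simp add: Tf_def power_divide)
    apply (rule splity[where m="7/8"])
    apply (rule splity[where m="13/16"])
    apply (rule leaf; simp add: Tf_def power_divide)
    apply (rule leaf; simp add: Tf_def power_divide)
    apply (rule splitx[where m="15/32"])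
    apply (rule leaf; simp add: Tf_def power_divide)
    apply (rule leaf; simp add: Tf_def power_divide)
    apply (rule splitx[where m="3/4"])
    apply (rule splitx[where m="5/8"])
    apply (rule splitx[where m="9/16"])
    apply (rule splity[where m="1/2"])
    apply (rule splitx[where m="17/32"])
    apply (rule splity[where m="1/4"])
    apply (rule leaf; simp add: Tf_def power_divide)
    apply (rule splity[where m="3/8"])
    apply (rule splity[where m="5/16"])
    apply (rule leaf; simp add: Tf_def power_divide)
    apply (rule leaf; simp add: Tf_def power_divide)
    apply (rule splitx[where m="33/64"])
    apply (rule splity[where m="7/16"])
    apply (rule leaf; simp add: Tf_def power_divide)
    apply (rule leaf; simp add: Tf_def power_divide)
    apply (rule splity[where m="7/16"])
    apply (rule leaf; simp add: Tf_def power_divide)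
    apply (rule leaf; simp add: Tf_def power_divide)
    apply (rule splity[where m="1/4"])
    apply (rule leaf; simp add: Tf_def power_divide)
    apply (rule splity[where m="3/8"])
    apply (rule splitx[where m="35/64"])
    apply (rule leaf; simp add: Tf_def power_divide)
    apply (rule leaf; simp add: Tf_def power_divide)
    apply (rule splity[where m="7/16"])
    apply (rule leaf; simp add: Tf_def power_divide)
    apply (rule splitx[where m="35/64"])
    apply (rule leaf; simp add: Tf_def power_divide)
    apply (rule leaf; simp add: Tf_def power_divide)
    apply (rule splity[where m="3/4"])
    apply (rule splitx[where m="17/32"])
    apply (rule splity[where m="5/8"])
    apply (rule splitx[where m="33/64"])
    apply (rule splity[where m="9/16"])
    apply (rule leaf; simp add: Tf_def power_divide)
    apply (rule leaf; simp add: Tf_def power_divide)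
    apply (rule splity[where m="9/16"])
    apply (rule leaf; simp add: Tf_def power_divide)
    apply (rule leaf; simp add: Tf_def power_divide)
    apply (rule splity[where m="11/16"])
    apply (rule leaf; simp add: Tf_def power_divide)
    apply (rule leaf; simp add: Tf_def power_divide)
    apply (rule splity[where m="5/8"])
    apply (rule splitx[where m="35/64"])
    apply (rule splity[where m="9/16"])
    apply (rule leaf; simp add: Tf_def power_divide)
    apply (rule leaf; simp add: Tf_def power_divide)
    apply (rule splity[where m="9/16"])
    apply (rule leaf; simp add: Tf_def power_divide)
    apply (rule leaf; simp add: Tf_def power_divide)
    apply (rule splity[where m="11/16"])
    apply (rule leaf; simp add: Tf_def power_divide)
    apply (rule leaf; simp add: Tf_def power_divide)
    apply (rule splity[where m="7/8"])
    apply (rule splity[where m="13/16"])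
    apply (rule splitx[where m="17/32"])
    apply (rule leaf; simp add: Tf_def power_divide)
    apply (rule leaf; simp add: Tf_def power_divide)
    apply (rule leaf; simp add: Tf_def power_divide)
    apply (rule splitx[where m="17/32"])
    apply (rule leaf; simp add: Tf_def power_divide)
    apply (rule leaf; simp add: Tf_def power_divide)
    apply (rule splity[where m="1/2"])
    apply (rule splity[where m="1/4"])
    apply (rule leaf; simp add: Tf_def power_divide)
    apply (rule splitx[where m="19/32"])
    apply (rule splity[where m="3/8"])
    apply (rule splitx[where m="37/64"])
    apply (rule leaf; simp add: Tf_def power_divide)
    apply (rule leaf; simp add: Tf_def power_divide)
    apply (rule splity[where m="7/16"])
    apply (rule leaf; simp add: Tf_def power_divide)
    apply (rule leaf; simp add: Tf_def power_divide)
    apply (rule splity[where m="3/8"])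
    apply (rule leaf; simp add: Tf_def power_divide)
    apply (rule splity[where m="7/16"])
    apply (rule leaf; simp add: Tf_def power_divide)
    apply (rule leaf; simp add: Tf_def power_divide)
    apply (rule splity[where m="3/4"])
    apply (rule splitx[where m="19/32"])
    apply (rule splity[where m="5/8"])
    apply (rule splity[where m="9/16"])
    apply (rule leaf; simp add: Tf_def power_divide)
    apply (rule leaf; simp add: Tf_def power_divide)
    apply (rule splity[where m="11/16"])
    apply (rule leaf; simp add: Tf_def power_divide)
    apply (rule leaf; simp add: Tf_def power_divide)
    apply (rule splity[where m="5/8"])
    apply (rule splity[where m="9/16"])
    apply (rule leaf; simp add: Tf_def power_divide)
    apply (rule leaf; simp add: Tf_def power_divide)
    apply (rule splity[where m="11/16"])
    apply (rule leaf; simp add: Tf_def power_divide)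
    apply (rule leaf; simp add: Tf_def power_divide)
    apply (rule splity[where m="7/8"])
    apply (rule splity[where m="13/16"])
    apply (rule splitx[where m="19/32"])
    apply (rule leaf; simp add: Tf_def power_divide)
    apply (rule leaf; simp add: Tf_def power_divide)
    apply (rule leaf; simp add: Tf_def power_divide)
    apply (rule splitx[where m="19/32"])
    apply (rule leaf; simp add: Tf_def power_divide)
    apply (rule leaf; simp add: Tf_def power_divide)
    apply (rule splitx[where m="11/16"])
    apply (rule splity[where m="1/2"])
    apply (rule splity[where m="1/4"])
    apply (rule leaf; simp add: Tf_def power_divide)
    apply (rule splitx[where m="21/32"])
    apply (rule splity[where m="3/8"])
    apply (rule leaf; simp add: Tf_def power_divide)
    apply (rule splitx[where m="41/64"])
    apply (rule leaf; simp add: Tf_def power_divide)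
    apply (rule leaf; simp add: Tf_def power_divide)
    apply (rule splity[where m="3/8"])
    apply (rule leaf; simp add: Tf_def power_divide)
    apply (rule leaf; simp add: Tf_def power_divide)
    apply (rule splity[where m="3/4"])
    apply (rule splitx[where m="21/32"])
    apply (rule splity[where m="5/8"])
    apply (rule splity[where m="9/16"])
    apply (rule leaf; simp add: Tf_def power_divide)
    apply (rule leaf; simp add: Tf_def power_divide)
    apply (rule splity[where m="11/16"])
    apply (rule leaf; simp add: Tf_def power_divide)
    apply (rule leaf; simp add: Tf_def power_divide)
    apply (rule splitx[where m="43/64"])
    apply (rule splity[where m="5/8"])
    apply (rule leaf; simp add: Tf_def power_divide)
    apply (rule leaf; simp add: Tf_def power_divide)
    apply (rule splity[where m="5/8"])
    apply (rule leaf; simp add: Tf_def power_divide)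
    apply (rule leaf; simp add: Tf_def power_divide)
    apply (rule splity[where m="7/8"])
    apply (rule splity[where m="13/16"])
    apply (rule splitx[where m="21/32"])
    apply (rule leaf; simp add: Tf_def power_divide)
    apply (rule leaf; simp add: Tf_def power_divide)
    apply (rule leaf; simp add: Tf_def power_divide)
    apply (rule splitx[where m="21/32"])
    apply (rule leaf; simp add: Tf_def power_divide)
    apply (rule leaf; simp add: Tf_def power_divide)
    apply (rule splity[where m="1/2"])
    apply (rule splity[where m="1/4"])
    apply (rule leaf; simp add: Tf_def power_divide)
    apply (rule splity[where m="3/8"])
    apply (rule leaf; simp add: Tf_def power_divide)
    apply (rule splitx[where m="23/32"])
    apply (rule leaf; simp add: Tf_def power_divide)
    apply (rule leaf; simp add: Tf_def power_divide)
    apply (rule splity[where m="3/4"])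
    apply (rule splity[where m="5/8"])
    apply (rule splitx[where m="23/32"])
    apply (rule leaf; simp add: Tf_def power_divide)
    apply (rule leaf; simp add: Tf_def power_divide)
    apply (rule splity[where m="11/16"])
    apply (rule leaf; simp add: Tf_def power_divide)
    apply (rule leaf; simp add: Tf_def power_divide)
    apply (rule splitx[where m="23/32"])
    apply (rule splity[where m="7/8"])
    apply (rule leaf; simp add: Tf_def power_divide)
    apply (rule leaf; simp add: Tf_def power_divide)
    apply (rule splity[where m="7/8"])
    apply (rule leaf; simp add: Tf_def power_divide)
    apply (rule leaf; simp add: Tf_def power_divide)
    apply (rule splitx[where m="7/8"])
    apply (rule splitx[where m="13/16"])
    apply (rule splity[where m="1/2"])
    apply (rule splitx[where m="25/32"])
    apply (rule splitx[where m="49/64"])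
    apply (rule leaf; simp add: Tf_def power_divide)
    apply (rule leaf; simp add: Tf_def power_divide)
    apply (rule leaf; simp add: Tf_def power_divide)
    apply (rule splity[where m="3/4"])
    apply (rule splity[where m="5/8"])
    apply (rule leaf; simp add: Tf_def power_divide)
    apply (rule splitx[where m="25/32"])
    apply (rule leaf; simp add: Tf_def power_divide)
    apply (rule leaf; simp add: Tf_def power_divide)
    apply (rule splity[where m="7/8"])
    apply (rule splitx[where m="25/32"])
    apply (rule leaf; simp add: Tf_def power_divide)
    apply (rule leaf; simp add: Tf_def power_divide)
    apply (rule leaf; simp add: Tf_def power_divide)
    apply (rule splity[where m="1/2"])
    apply (rule leaf; simp add: Tf_def power_divide)
    apply (rule splitx[where m="27/32"])
    apply (rule splity[where m="3/4"])
    apply (rule leaf; simp add: Tf_def power_divide)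
    apply (rule leaf; simp add: Tf_def power_divide)
    apply (rule splity[where m="3/4"])
    apply (rule leaf; simp add: Tf_def power_divide)
    apply (rule leaf; simp add: Tf_def power_divide)
    apply (rule splitx[where m="15/16"])
    apply (rule splity[where m="1/2"])
    apply (rule leaf; simp add: Tf_def power_divide)
    apply (rule splity[where m="3/4"])
    apply (rule leaf; simp add: Tf_def power_divide)
    apply (rule leaf; simp add: Tf_def power_divide)
    apply (rule leaf; simp add: Tf_def power_divide)
    done

lemma Tf_le:
  assumes "0 \<le> x" "x \<le> 1" "0 \<le> y" "y \<le> 1"
  shows "Tf x (1 - x^2) y (1 - y^2) \<le> 146048 / 1000000"
  using good_all assms unfolding good_def by blast


lemma coef_bound_strict:
  assumes hol: "h holomorphic_on B" and bd: "\<And>z. z \<in> B \<Longrightarrow> cmod (h z) \<le> 1" and a: "cmod (h 0) < 1"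
  shows "cmod (taylor_coeff h 1) \<le> 1 - (cmod (h 0))^2"
    and "cmod (taylor_coeff h 2) \<le> 1 - (cmod (h 0))^2"
proof -
  define a where "a = h 0"
  have a1: "cmod a < 1" using a by (simp add: a_def)
  have a0: "h 0 = a" by (simp add: a_def)
  have sq: "cnj a * a = of_real ((cmod a)^2)" by (subst complex_norm_square) (rule mult.commute)
  have spos: "0 < 1 - (cmod a)^2" using a1 by (simp add: abs_square_less_1)
  have e: "1 - cnj a * a = of_real (1 - (cmod a)^2)" by (simp add: sq)
  have ne2: "cmod (1 - cnj a * a) = 1 - (cmod a)^2"
    unfolding e norm_of_real using spos by simp
  define m where "m = (\<lambda>z. (h z - a) / (1 - cnj a * h z))"
  have hm: "m holomorphic_on B" unfolding m_def by (rule mobius(1)[OF hol bd a1])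
  have bm: "\<And>z. z \<in> B \<Longrightarrow> cmod (m z) \<le> 1" unfolding m_def by (rule mobius(2)[OF hol bd a1])
  have m0: "m 0 = 0" by (simp add: m_def a_def)
  have r1: "taylor_coeff m 1 * (1 - cnj a * a) = taylor_coeff h 1"
  proof -
    have "(\<Sum>i=0..1. taylor_coeff m i * ((if 1 - i = 0 then 1 else 0) - cnj a * taylor_coeff h (1 - i)))
         = taylor_coeff h 1 - (if (1::nat) = 0 then a else 0)"
      unfolding m_def by (rule mobius_coeffs[OF hol bd a1])
    then show ?thesis using m0 by (simp add: tc_0 a0)
  qed
  obtain n where hn: "n holomorphic_on B" and bn: "\<And>z. z \<in> B \<Longrightarrow> cmod (n z) \<le> 1"
    and tn: "\<And>k. taylor_coeff n k = taylor_coeff m (Suc k)" and "\<And>z. z \<in> B \<Longrightarrow> m z = z * n z"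
    using divz[OF hm m0 bm] by metis
  have "cmod (taylor_coeff m 1) \<le> 1" using bn[of 0] tn[of 0] by (simp add: tc_0)
  then have "cmod (taylor_coeff m 1) * (1 - (cmod a)^2) \<le> 1 * (1 - (cmod a)^2)"
    using spos by (intro mult_right_mono) auto
  moreover have "cmod (taylor_coeff h 1) = cmod (taylor_coeff m 1) * (1 - (cmod a)^2)"
    unfolding r1[symmetric] norm_mult ne2 ..
  ultimately show "cmod (taylor_coeff h 1) \<le> 1 - (cmod (h 0))^2" by (simp add: a_def)
  define G where "G = (\<lambda>z. (h z + h (-1 * z)) / 2)"
  have hneg: "(\<lambda>z. h (-1 * z)) holomorphic_on B"
  proof (rule holomorphic_on_compose[where g=h, unfolded o_def])
    show "(\<lambda>z. -1 * z) holomorphic_on B" by (intro holomorphic_intros)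
    have "(\<lambda>z. -1 * z) ` B \<subseteq> B" by auto
    then show "h holomorphic_on (\<lambda>z. -1 * z) ` B" by (rule holomorphic_on_subset[OF hol])
  qed
  have hG: "G holomorphic_on B" unfolding G_def by (intro holomorphic_intros hol hneg) auto
  have bG: "cmod (G z) \<le> 1" if "z \<in> B" for z
  proof -
    have "cmod (h z + h (-1 * z)) \<le> cmod (h z) + cmod (h (-1*z))" by (rule norm_triangle_ineq)
    also have "\<dots> \<le> 2" using bd[OF that] bd[of "-1*z"] that by simp
    finally show ?thesis by (simp add: G_def norm_divide)
  qed
  have tneg: "taylor_coeff (\<lambda>z. h (-1 * z)) k = (-1)^k * taylor_coeff h k" for k
    unfolding taylor_coeff_def
    using higher_deriv_compose_linear[OF hol, of B 0 "-1" k] by simp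
  have tG: "taylor_coeff G k = (taylor_coeff h k + (-1)^k * taylor_coeff h k) / 2" for k
  proof -
    have "taylor_coeff G k = taylor_coeff (\<lambda>z. (1/2) * (h z + h (-1 * z))) k"
      by (rule tc_cong) (simp add: G_def)
    also have "\<dots> = (1/2) * taylor_coeff (\<lambda>z. h z + h (-1 * z)) k"
      by (rule tc_cmult) (intro holomorphic_intros hol hneg)
    also have "\<dots> = (1/2) * (taylor_coeff h k + taylor_coeff (\<lambda>z. h (-1 * z)) k)"
      by (subst tc_add[OF hol hneg]) (rule refl)
    also have "\<dots> = (1/2) * (taylor_coeff h k + (-1)^k * taylor_coeff h k)"
      by (simp only: tneg)
    finally show ?thesis by simp
  qed
  have G0: "G 0 = a" by (simp add: G_def a_def)
  have G1: "taylor_coeff G 1 = 0" using tG[of 1] by simp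
  have G2: "taylor_coeff G 2 = taylor_coeff h 2" using tG[of 2] by simp
  define mG where "mG = (\<lambda>z. (G z - a) / (1 - cnj a * G z))"
  have hmG: "mG holomorphic_on B" unfolding mG_def by (rule mobius(1)[OF hG bG a1])
  have bmG: "\<And>z. z \<in> B \<Longrightarrow> cmod (mG z) \<le> 1" unfolding mG_def by (rule mobius(2)[OF hG bG a1])
  have mG0: "mG 0 = 0" by (simp add: mG_def G0)
  have q1: "taylor_coeff mG 1 * (1 - cnj a * a) = 0"
    using mobius_coeffs[OF hG bG a1, of 1] mG0 G1 by (simp add: mG_def[symmetric] tc_0 G0)
  have ne: "1 - cnj a * a \<noteq> 0" using spos unfolding e by (simp only: of_real_eq_0_iff)
  have mG1: "taylor_coeff mG 1 = 0" using q1 ne by simp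
  have q2: "taylor_coeff mG 2 * (1 - cnj a * a) = taylor_coeff h 2"
    using mobius_coeffs[OF hG bG a1, of 2] mG0 mG1 G1 G2
    by (simp add: mG_def[symmetric] tc_0 G0 numeral_2_eq_2)
  obtain n1 where hn1: "n1 holomorphic_on B" and bn1: "\<And>z. z \<in> B \<Longrightarrow> cmod (n1 z) \<le> 1"
    and tn1: "\<And>k. taylor_coeff n1 k = taylor_coeff mG (Suc k)" and "\<And>z. z \<in> B \<Longrightarrow> mG z = z * n1 z"
    using divz[OF hmG mG0 bmG] by metis
  have n10: "n1 0 = 0" using tn1[of 0] mG1 by (simp add: tc_0)
  obtain n2 where "n2 holomorphic_on B" and bn2: "\<And>z. z \<in> B \<Longrightarrow> cmod (n2 z) \<le> 1"
    and tn2: "\<And>k. taylor_coeff n2 k = taylor_coeff n1 (Suc k)" and "\<And>z. z \<in> B \<Longrightarrow> n1 z = z * n2 z"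
    using divz[OF hn1 n10 bn1] by metis
  have "cmod (taylor_coeff mG 2) \<le> 1" using bn2[of 0] tn2[of 0] tn1[of 1] by (simp add: tc_0 numeral_2_eq_2)
  then have "cmod (taylor_coeff mG 2) * (1 - (cmod a)^2) \<le> 1 * (1 - (cmod a)^2)"
    using spos by (intro mult_right_mono) auto
  moreover have "cmod (taylor_coeff h 2) = cmod (taylor_coeff mG 2) * (1 - (cmod a)^2)"
    unfolding q2[symmetric] norm_mult ne2 ..
  ultimately show "cmod (taylor_coeff h 2) \<le> 1 - (cmod (h 0))^2" by (simp add: a_def)
qed

lemma coef_bound:
  assumes hol: "h holomorphic_on B" and bd: "\<And>z. z \<in> B \<Longrightarrow> cmod (h z) \<le> 1"
    and k: "k = 1 \<or> k = 2"
  shows "cmod (taylor_coeff h k) \<le> 1 - (cmod (h 0))^2"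
proof -
  have R: "r * cmod (taylor_coeff h k) + r^2 * (cmod (h 0))^2 \<le> 1" if r: "0 < r" "r < 1" for r :: real
  proof -
    define hr where "hr = (\<lambda>z. of_real r * h z)"
    have hh: "hr holomorphic_on B" unfolding hr_def by (intro holomorphic_intros hol)
    have bh: "cmod (hr z) \<le> 1" if "z \<in> B" for z
    proof -
      have "r * cmod (h z) \<le> r * 1" using bd[OF that] r by (intro mult_left_mono) auto
      then have "r * cmod (h z) \<le> 1" using r by linarith
      then show ?thesis using r by (simp add: hr_def norm_mult)
    qed
    have h0: "cmod (hr 0) < 1"
    proof -
      have "r * cmod (h 0) \<le> r * 1" using bd[of 0] r by (intro mult_left_mono) auto
      then have "r * cmod (h 0) < 1" using r by linarith
      then show ?thesis using r by (simp add: hr_def norm_mult)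
    qed
    have "cmod (taylor_coeff hr k) \<le> 1 - (cmod (hr 0))^2"
      using k coef_bound_strict[OF hh bh h0] by auto
    moreover have "taylor_coeff hr k = of_real r * taylor_coeff h k"
      unfolding hr_def by (rule tc_cmult[OF hol])
    ultimately show ?thesis using r by (simp add: hr_def norm_mult power_mult_distrib)
  qed
  have "cmod (taylor_coeff h k) + (cmod (h 0))^2 \<le> 1"
  proof (rule field_le_mult_one_interval)
    fix z :: real assume z: "0 < z" "z < 1"
    define r where "r = sqrt z"
    have r: "0 < r" "r < 1" "r^2 = z" using z by (auto simp: r_def)
    have "z \<le> r" using r z by (metis less_le_not_le mult_left_le_one_le power2_eq_square less_imp_le)
    then have "z * cmod (taylor_coeff h k) \<le> r * cmod (taylor_coeff h k)"
      by (intro mult_right_mono) auto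
    then show "z * (cmod (taylor_coeff h k) + (cmod (h 0))^2) \<le> 1"
      using R[OF r(1,2)] r(3) by (simp add: algebra_simps)
  qed
  then show ?thesis by simp
qed


lemma sinh_arsinh_complex: "sinh (arsinh (u::complex)) = u"
proof -
  define z where "z = u^2 + 1"
  define r where "r = z powr of_real (1/2)"
  have ar: "arsinh u = ln (u + r)" by (simp add: arsinh_def r_def z_def)
  show ?thesis
  proof (cases "z = 0")
    case True
    then have r0: "r = 0" by (simp add: r_def)
    have u2: "u * u = -1" using True by (simp add: z_def power2_eq_square add_eq_0_iff) (metis minus_minus)
    then have un: "u \<noteq> 0" by auto
    have "inverse u = - u" using u2 un by (simp add: field_simps)
    then show ?thesis using un by (simp add: ar r0 sinh_ln_complex)
  next
    case False
    have rr: "r * r = z"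
    proof -
      have "r * r = exp ((1/2) * ln z) * exp ((1/2) * ln z)" using False by (simp add: r_def powr_def)
      also have "\<dots> = exp (ln z)" by (simp flip: exp_add)
      also have "\<dots> = z" using False by simp
      finally show ?thesis .
    qed
    have x0: "u + r \<noteq> 0"
    proof
      assume "u + r = 0"
      then have "r = -u" by (simp add: add_eq_0_iff)
      then have "z = u * u" using rr by simp
      then show False by (simp add: z_def power2_eq_square)
    qed
    have "sinh (arsinh u) = ((u + r) - inverse (u + r)) / 2" using x0 by (simp add: ar sinh_ln_complex)
    also have "\<dots> = ((u + r) * (u + r) - 1) / (2 * (u + r))" using x0 by (simp add: field_simps)
    also have "(u + r) * (u + r) - 1 = 2 * u * (u + r)" using rr by (simp add: z_def algebra_simps power2_eq_square)
    also have "2 * u * (u + r) / (2 * (u + r)) = u" using x0 by (metis mult.assoc mult.commute nonzero_mult_div_cancel_right mult_eq_0_iff zero_neq_numeral)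
    finally show ?thesis .
  qed
qed

lemma sum2: "(\<Sum>i=0..(2::nat). F i) = F 0 + F 1 + F 2"
  by (simp add: eval_nat_numeral)
lemma sum3: "(\<Sum>i=0..(3::nat). F i) = F 0 + F 1 + F 2 + F 3"
  by (simp add: eval_nat_numeral)
lemma sum4: "(\<Sum>i=0..(4::nat). F i) = F 0 + F 1 + F 2 + F 3 + F 4"
  by (simp add: eval_nat_numeral)
lemma sum1: "(\<Sum>i=0..(1::nat). F i) = F 0 + F 1"
  by (simp add: eval_nat_numeral)


lemma S_rho_coeffs:
  assumes "f \<in> S_rho"
  obtains w where "w holomorphic_on B" "w ` B \<subseteq> B" "w 0 = 0"
    "taylor_coeff f 3 = (taylor_coeff w 2 + (taylor_coeff w 1)^2) / 2"
    "taylor_coeff f 4 = taylor_coeff w 3 / 3 + taylor_coeff w 1 * taylor_coeff w 2 / 2 + (taylor_coeff w 1)^3 / 9"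
    "taylor_coeff f 5 = taylor_coeff w 4 / 4 + taylor_coeff w 1 * taylor_coeff w 3 / 3
       + (taylor_coeff w 2)^2 / 8 + (taylor_coeff w 1)^2 * taylor_coeff w 2 / 8 - (taylor_coeff w 1)^4 / 72"
proof -
  from assms have hf: "f holomorphic_on B" and inj: "inj_on f B" and f0: "f 0 = 0" and df0: "deriv f 0 = 1"
    and sub: "subordinate (\<lambda>z. if z = 0 then 1 else z * deriv f z / f z) (\<lambda>z. 1 + arsinh z)"
    unfolding S_rho_def by auto
  from sub obtain w where hw: "w holomorphic_on B" and wim: "w ` B \<subseteq> B" and w0: "w 0 = 0"
    and weq: "\<And>z. z \<in> B \<Longrightarrow> (if z = 0 then 1 else z * deriv f z / f z) = 1 + arsinh (w z)"
    unfolding subordinate_def by auto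
  define h where "h = (\<lambda>z. if z = 0 then deriv f 0 else (f z - f 0) / (z - 0))"
  have hh: "h holomorphic_on B" unfolding h_def by (rule pole_lemma_open[OF hf]) auto
  have fzh: "f z = z * h z" if "z \<in> B" for z
    by (cases "z = 0") (auto simp: h_def f0)
  have h0: "h 0 = 1" by (simp add: h_def df0)
  have hnz: "h z \<noteq> 0" if z: "z \<in> B" for z
  proof (cases "z = 0")
    case True then show ?thesis by (simp add: h0)
  next
    case False
    have "f z \<noteq> f 0" using inj z False unfolding inj_on_def by (metis centre_in_ball zero_less_one)
    then show ?thesis using False by (simp add: h_def f0)
  qed
  have hdf: "deriv f holomorphic_on B" by (rule holomorphic_deriv[OF hf]) simp
  define q where "q = (\<lambda>z. deriv f z / h z - 1)"
  have hq: "q holomorphic_on B" unfolding q_def using hnz by (intro holomorphic_intros hdf hh) auto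
  have q0: "q 0 = 0" by (simp add: q_def h0 df0)
  have qeq: "q z = arsinh (w z)" if z: "z \<in> B" for z
  proof (cases "z = 0")
    case True then show ?thesis by (simp add: q0 w0)
  next
    case False
    have "z * deriv f z / f z = 1 + arsinh (w z)" using weq[OF z] False by simp
    moreover have "z * deriv f z / f z = deriv f z / h z" using fzh[OF z] False by simp
    ultimately show ?thesis by (simp add: q_def)
  qed
  have wq: "w z = sinh (q z)" if "z \<in> B" for z by (simp add: qeq[OF that] sinh_arsinh_complex)
  define v where "v = (\<lambda>z. exp (q z))"
  have hv: "v holomorphic_on B" unfolding v_def by (intro holomorphic_intros hq)
  have hdq: "deriv q holomorphic_on B" by (rule holomorphic_deriv[OF hq]) simp
  have dv: "deriv v z = deriv q z * v z" if z: "z \<in> B" for z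
  proof -
    have "(q has_field_derivative deriv q z) (at z)" by (rule holomorphic_derivI[OF hq _ z]) simp
    then have "((\<lambda>z. exp (q z)) has_field_derivative exp (q z) * deriv q z) (at z)"
      by (rule DERIV_chain2[OF DERIV_exp])
    then show ?thesis unfolding v_def by (simp add: DERIV_imp_deriv mult.commute)
  qed
  have wv: "2 * (w z * v z) = v z * v z - 1" if z: "z \<in> B" for z
    by (simp add: wq[OF z] v_def sinh_field_def exp_minus field_simps)
  have dfq: "deriv f z = h z * (1 + q z)" if z: "z \<in> B" for z
    using hnz[OF z] by (simp add: q_def)
  have hA: "taylor_coeff h k = taylor_coeff f (Suc k)" for k
  proof -
    have "taylor_coeff f (Suc k) = taylor_coeff (\<lambda>z. z * h z) (Suc k)" by (rule tc_cong) (simp add: fzh)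
    then show ?thesis by (simp add: tc_zmult[OF hh])
  qed
  have t1q: "taylor_coeff (\<lambda>z. 1 + q z) m = (if m = 0 then 1 else 0) + taylor_coeff q m" for m
    using tc_add[of "\<lambda>z. 1" q m] hq by (simp add: tc_const)
  have EA: "of_nat (Suc n) * taylor_coeff f (Suc n) =
        (\<Sum>i=0..n. taylor_coeff f (Suc i) * ((if n - i = 0 then 1 else 0) + taylor_coeff q (n - i)))" for n
  proof -
    have "of_nat (Suc n) * taylor_coeff f (Suc n) = taylor_coeff (deriv f) n" by (simp add: tc_deriv[OF hf])
    also have "\<dots> = taylor_coeff (\<lambda>z. h z * (1 + q z)) n" by (rule tc_cong) (simp add: dfq)
    also have "\<dots> = (\<Sum>i=0..n. taylor_coeff h i * taylor_coeff (\<lambda>z. 1 + q z) (n - i))"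
      by (rule tc_mult[OF hh]) (intro holomorphic_intros hq)
    finally show ?thesis by (simp add: hA t1q)
  qed
  have EV: "of_nat (Suc n) * taylor_coeff v (Suc n) =
        (\<Sum>i=0..n. of_nat (Suc i) * taylor_coeff q (Suc i) * taylor_coeff v (n - i))" for n
  proof -
    have "of_nat (Suc n) * taylor_coeff v (Suc n) = taylor_coeff (deriv v) n" by (simp add: tc_deriv[OF hv])
    also have "\<dots> = taylor_coeff (\<lambda>z. deriv q z * v z) n" by (rule tc_cong) (simp add: dv)
    also have "\<dots> = (\<Sum>i=0..n. taylor_coeff (deriv q) i * taylor_coeff v (n - i))"
      by (rule tc_mult[OF hdq hv])
    finally show ?thesis by (simp add: tc_deriv[OF hq])
  qed
  have EW: "2 * (\<Sum>i=0..n. taylor_coeff w i * taylor_coeff v (n - i)) =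
        (\<Sum>i=0..n. taylor_coeff v i * taylor_coeff v (n - i)) - (if n = 0 then 1 else 0)" for n
  proof -
    have "2 * (\<Sum>i=0..n. taylor_coeff w i * taylor_coeff v (n - i)) = 2 * taylor_coeff (\<lambda>z. w z * v z) n"
      by (simp add: tc_mult[OF hw hv])
    also have "\<dots> = taylor_coeff (\<lambda>z. 2 * (w z * v z)) n"
      by (rule tc_cmult[symmetric]) (intro holomorphic_intros hw hv)
    also have "\<dots> = taylor_coeff (\<lambda>z. v z * v z - 1) n" by (rule tc_cong) (simp add: wv)
    also have "\<dots> = taylor_coeff (\<lambda>z. v z * v z) n - (if n = 0 then 1 else 0)"
      using tc_diff[of "\<lambda>z. v z * v z" "\<lambda>z. 1" n] hv by (simp add: tc_const holomorphic_intros)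
    finally show ?thesis by (simp add: tc_mult[OF hv hv])
  qed
  have a1: "taylor_coeff f 1 = 1" using df0 by (simp add: taylor_coeff_def)
  have Q0: "taylor_coeff q 0 = 0" by (simp add: tc_0 q0)
  have V0: "taylor_coeff v 0 = 1" by (simp add: tc_0 v_def q0)
  have C0: "taylor_coeff w 0 = 0" by (simp add: tc_0 w0)
  define A where "A = taylor_coeff f"
  define Q where "Q = taylor_coeff q"
  define V where "V = taylor_coeff v"
  define C where "C = taylor_coeff w"
  note defs = A_def[symmetric] Q_def[symmetric] V_def[symmetric] C_def[symmetric] eval_nat_numeral
  have EA1: "2 * A 2 = A 1 * (0 + Q 1) + A 2 * (1 + Q 0)" using EA[of 1] by (simp add: sum1 defs)
  have EA2: "3 * A 3 = A 1 * (0 + Q 2) + A 2 * (0 + Q 1) + A 3 * (1 + Q 0)" using EA[of 2] by (simp add: sum2 defs)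
  have EA3: "4 * A 4 = A 1 * (0 + Q 3) + A 2 * (0 + Q 2) + A 3 * (0 + Q 1) + A 4 * (1 + Q 0)"
    using EA[of 3] by (simp add: sum3 defs)
  have EA4: "5 * A 5 = A 1 * (0 + Q 4) + A 2 * (0 + Q 3) + A 3 * (0 + Q 2) + A 4 * (0 + Q 1) + A 5 * (1 + Q 0)"
    using EA[of 4] by (simp add: sum4 defs)
  have EV0: "V 1 = Q 1 * V 0" using EV[of 0] by (simp add: defs)
  have EV1: "2 * V 2 = Q 1 * V 1 + 2 * Q 2 * V 0" using EV[of 1] by (simp add: sum1 defs)
  have EV2: "3 * V 3 = Q 1 * V 2 + 2 * Q 2 * V 1 + 3 * Q 3 * V 0" using EV[of 2] by (simp add: sum2 defs)
  have EV3: "4 * V 4 = Q 1 * V 3 + 2 * Q 2 * V 2 + 3 * Q 3 * V 1 + 4 * Q 4 * V 0" using EV[of 3] by (simp add: sum3 defs)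
  have EW1: "2 * (C 0 * V 1 + C 1 * V 0) = V 0 * V 1 + V 1 * V 0" using EW[of 1] by (simp add: sum1 defs)
  have EW2: "2 * (C 0 * V 2 + C 1 * V 1 + C 2 * V 0) = V 0 * V 2 + V 1 * V 1 + V 2 * V 0" using EW[of 2] by (simp add: sum2 defs)
  have EW3: "2 * (C 0 * V 3 + C 1 * V 2 + C 2 * V 1 + C 3 * V 0) = V 0 * V 3 + V 1 * V 2 + V 2 * V 1 + V 3 * V 0"
    using EW[of 3] by (simp add: sum3 defs)
  have EW4: "2 * (C 0 * V 4 + C 1 * V 3 + C 2 * V 2 + C 3 * V 1 + C 4 * V 0) = V 0 * V 4 + V 1 * V 3 + V 2 * V 2 + V 3 * V 1 + V 4 * V 0"
    using EW[of 4] by (simp add: sum4 defs)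
  have b: "A 1 = 1" "Q 0 = 0" "V 0 = 1" "C 0 = 0" using a1 Q0 V0 C0 by (simp_all add: defs)
  have s1: "V 1 = Q 1" using EV0 b by algebra
  have s2: "C 1 = Q 1" using EW1 b s1 by algebra
  have s3: "A 2 = Q 1" using EA1 b by algebra
  have s4: "V 2 = Q 2 + Q 1^2 / 2" using EV1 b s1 by algebra
  have s5: "C 2 = Q 2" using EW2 b s1 s2 s4 by algebra
  have s6: "A 3 = (Q 2 + Q 1^2) / 2" using EA2 b s3 by algebra
  have s7: "V 3 = Q 3 + Q 1 * Q 2 + Q 1^3 / 6" using EV2 b s1 s4 by algebra
  have s8: "C 3 = Q 3 + Q 1^3 / 6" using EW3 b s1 s2 s4 s5 s7 by algebra
  have s9: "A 4 = (Q 3 + Q 1 * Q 2 + A 3 * Q 1) / 3" using EA3 b s3 by algebra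
  have s10: "V 4 = (Q 1 * V 3 + 2 * Q 2 * V 2 + 3 * Q 3 * V 1 + 4 * Q 4) / 4" using EV3 b by algebra
  have s11: "C 4 = (V 4 + V 1 * V 3 + V 2 * V 2 / 2 - C 1 * V 3 - C 2 * V 2 - C 3 * V 1)" using EW4 b
    by algebra
  have s12: "A 5 = (Q 4 + Q 1 * Q 3 + A 3 * Q 2 + A 4 * Q 1) / 4" using EA4 b s3 by algebra
  have q3: "Q 3 = C 3 - C 1^3 / 6" using s8 s2 by algebra
  have c4: "C 4 = Q 4 + Q 1^2 * Q 2 / 2"
    unfolding s11 s10 s1 s2 s4 s5 s7 s8 by (simp add: field_simps power2_eq_square power3_eq_cube)
  have "A 3 = (C 2 + C 1^2) / 2" unfolding s6 s2 s5 ..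
  moreover have "A 4 = C 3 / 3 + C 1 * C 2 / 2 + C 1^3 / 9"
    unfolding s9 s6 s8 s2 s5 by (simp add: field_simps power2_eq_square power3_eq_cube)
  moreover have "A 5 = C 4 / 4 + C 1 * C 3 / 3 + C 2^2 / 8 + C 1^2 * C 2 / 8 - C 1^4 / 72"
    unfolding s12 s9 s6 c4 s8 s2 s5 by (simp add: field_simps power2_eq_square power3_eq_cube power4_eq_xxxx)
  ultimately show ?thesis unfolding A_def C_def by (intro that[OF hw wim w0])
qed


theorem corollary2p4:
  assumes "f \<in> S_rho"
  shows "cmod (taylor_coeff f 3 * taylor_coeff f 5 - (taylor_coeff f 4)\<^sup>2) \<le> 0.146048"
proof -
  obtain w where hw: "w holomorphic_on B" and wim: "w ` B \<subseteq> B" and w0: "w 0 = 0"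
    and e3: "taylor_coeff f 3 = (taylor_coeff w 2 + (taylor_coeff w 1)^2) / 2"
    and e4: "taylor_coeff f 4 = taylor_coeff w 3 / 3 + taylor_coeff w 1 * taylor_coeff w 2 / 2 + (taylor_coeff w 1)^3 / 9"
    and e5: "taylor_coeff f 5 = taylor_coeff w 4 / 4 + taylor_coeff w 1 * taylor_coeff w 3 / 3
       + (taylor_coeff w 2)^2 / 8 + (taylor_coeff w 1)^2 * taylor_coeff w 2 / 8 - (taylor_coeff w 1)^4 / 72"
    using S_rho_coeffs[OF assms] by metis
  define c where "c = taylor_coeff w"
  have HH: "taylor_coeff f 3 * taylor_coeff f 5 - (taylor_coeff f 4)\<^sup>2 = Hc (c 1) (c 2) (c 3) (c 4)"
    unfolding Hc_def e3 e4 e5 c_def ..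
  have wlt: "cmod (w z) < 1" if "cmod z < 1" for z
  proof -
    have "z \<in> B" using that by simp
    then have "w z \<in> B" by (rule subsetD[OF wim imageI])
    then show ?thesis by simp
  qed
  have wle: "cmod (w z) \<le> 1" if "z \<in> B" for z using wlt[of z] that by auto
  have c1: "c 1 = deriv w 0" by (simp add: c_def taylor_coeff_def)
  have c1le: "cmod (c 1) \<le> 1" unfolding c1 using Schwarz_Lemma(2)[OF hw w0 wlt, of 0] by simp
  have bnd: "cmod (Hc (c 1) (c 2) (c 3) (c 4)) \<le> 146048 / 1000000"
  proof (cases "cmod (c 1) = 1")
    case True
    then obtain \<alpha> where al: "\<And>z. cmod z < 1 \<Longrightarrow> w z = \<alpha> * z"
      using Schwarz_Lemma(3)[OF hw w0 wlt, of 0] c1 by auto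
    have ck: "c k = taylor_coeff (\<lambda>z. \<alpha> * z) k" for k
      unfolding c_def by (rule tc_cong) (simp add: al)
    have "c 2 = 0" "c 3 = 0" "c 4 = 0" by (simp_all add: ck taylor_coeff_def)
    then have "Hc (c 1) (c 2) (c 3) (c 4) = - (25/1296) * (c 1)^6"
      by (simp add: Hc_def field_simps power2_eq_square eval_nat_numeral)
    then have "cmod (Hc (c 1) (c 2) (c 3) (c 4)) = 25/1296" using True by (simp add: norm_mult norm_power)
    then show ?thesis by simp
  next
    case False
    with c1le have c1lt: "cmod (c 1) < 1" by simp
    obtain g where hg: "g holomorphic_on B" and bg: "\<And>z. z \<in> B \<Longrightarrow> cmod (g z) \<le> 1"
      and tg: "\<And>k. taylor_coeff g k = taylor_coeff w (Suc k)" and "\<And>z. z \<in> B \<Longrightarrow> w z = z * g z"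
      using divz[OF hw w0 wle] by metis
    have g0: "g 0 = c 1" using tg[of 0] by (simp add: tc_0 c_def)
    define m where "m = (\<lambda>z. (g z - c 1) / (1 - cnj (c 1) * g z))"
    have hm: "m holomorphic_on B" unfolding m_def by (rule mobius(1)[OF hg bg c1lt])
    have bm: "\<And>z. z \<in> B \<Longrightarrow> cmod (m z) \<le> 1" unfolding m_def by (rule mobius(2)[OF hg bg c1lt])
    have m0: "m 0 = 0" by (simp add: m_def g0)
    have R: "(\<Sum>i=0..n. taylor_coeff m i * ((if n - i = 0 then 1 else 0) - cnj (c 1) * taylor_coeff g (n - i)))
         = taylor_coeff g n - (if n = 0 then c 1 else 0)" for n
      unfolding m_def by (rule mobius_coeffs[OF hg bg c1lt])
    have gk: "taylor_coeff g k = c (Suc k)" for k by (simp add: tg c_def)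
    have M0: "taylor_coeff m 0 = 0" by (simp add: tc_0 m0)
    define d0 where "d0 = taylor_coeff m 1"
    define d1 where "d1 = taylor_coeff m 2"
    define d2 where "d2 = taylor_coeff m 3"
    define s where "s = 1 - (cmod (c 1))^2"
    have sq: "cnj (c 1) * c 1 = of_real ((cmod (c 1))^2)"
      by (subst complex_norm_square) (rule mult.commute)
    have S: "1 - cnj (c 1) * c 1 = of_real s"
      unfolding s_def sq by simp
    have R1: "d0 * (1 - cnj (c 1) * c 1) = c 2"
      using R[of 1] by (simp add: sum1 M0 gk d0_def eval_nat_numeral)
    have R2: "d0 * (- (cnj (c 1) * c 2)) + d1 * (1 - cnj (c 1) * c 1) = c 3"
      using R[of 2] by (simp add: sum2 M0 gk d0_def d1_def eval_nat_numeral)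
    have R3: "d0 * (- (cnj (c 1) * c 3)) + d1 * (- (cnj (c 1) * c 2)) + d2 * (1 - cnj (c 1) * c 1) = c 4"
      using R[of 3] by (simp add: sum3 M0 gk d0_def d1_def d2_def eval_nat_numeral)
    have C2: "c 2 = of_real s * d0" using R1 unfolding S by (simp add: mult.commute)
    have C3: "c 3 = of_real s * d1 - cnj (c 1) * of_real s * d0^2"
      using R2 C2 unfolding S by (simp add: algebra_simps power2_eq_square)
    have C4: "c 4 = of_real s * d2 - cnj (c 1) * (d0 * c 3 + d1 * c 2)"
      using R3 unfolding S by (simp add: algebra_simps)
    obtain n where hn: "n holomorphic_on B" and bn: "\<And>z. z \<in> B \<Longrightarrow> cmod (n z) \<le> 1"
      and tn: "\<And>k. taylor_coeff n k = taylor_coeff m (Suc k)" and "\<And>z. z \<in> B \<Longrightarrow> m z = z * n z"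
      using divz[OF hm m0 bm] by metis
    have n0: "n 0 = d0" using tn[of 0] by (simp add: tc_0 d0_def)
    have y1: "cmod d0 \<le> 1" using bn[of 0] n0 by simp
    have b1: "cmod d1 \<le> 1 - (cmod d0)^2"
      using coef_bound[OF hn bn, of 1] tn[of 1] n0 by (simp add: d1_def eval_nat_numeral)
    have b2: "cmod d2 \<le> 1 - (cmod d0)^2"
      using coef_bound[OF hn bn, of 2] tn[of 2] n0 by (simp add: d2_def eval_nat_numeral)
    have "cmod (Hc (c 1) (c 2) (c 3) (c 4)) \<le> Tf (cmod (c 1)) s (cmod d0) (1 - (cmod d0)^2)"
      unfolding C4 unfolding C3 C2 s_def by (rule Hbound[OF c1le b1 b2])
    also have "\<dots> \<le> 146048 / 1000000"
      unfolding s_def by (rule Tf_le) (use c1le y1 in auto)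
    finally show ?thesis .
  qed
  show ?thesis unfolding HH using bnd by simp
qed

end
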